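(* Let $\Gamma$ be a temporal theory, let $M=((W,\preccurlyeq,S),V)$ be a total THT model, and let $T=\{\circ^ip\mid p\in V((i,0)),\ i\ge 0\}\subseteq\mathbb{P}^{\circ}$ (so that $V((i,0))=V((i,1))=\{p\mid \circ^ip\in T\}$ for all $i\ge0$). Then $M$ is a temporal equilibrium model of $\Gamma$ if and only if $T$ is a $\mathrm{THT}$-temporal safe belief set of $\Gamma$.
   Context: Fix a countable set $\mathbb{P}$ of atoms. Temporal formulas: $\varphi ::= p\mid\bot\mid\varphi\wedge\varphi\mid\varphi\vee\varphi\mid\varphi\to\varphi\mid\circ\varphi\mid\varphi\,\mathsf{U}\,\varphi\mid\varphi\,\mathsf{R}\,\varphi$; $\neg\varphi:=\varphi\to\bot$, $\circ^0\varphi:=\varphi$, $\circ^{i+1}\varphi:=\circ\circ^i\varphi$. The THT frame is $W=\mathbb{N}\times\{0,1\}$, $(i,h)\preccurlyeq(j,t)$ iff $i=j$ and $h\le t$, $S((i,k))=(i+1,k)$. A THT model is $((W,\preccurlyeq,S),V)$ with $V:W\to2^{\mathbb{P}}$ and $V((i,0))\subseteq V((i,1))$. Satisfaction: $M,w\models p$ iff $p\in V(w)$; $\bot$ never; $\wedge,\vee$ pointwise; $M,w\models\varphi\to\psi$ iff for all $v\succcurlyeq w$, $M,v\models\varphi$ implies $M,v\models\psi$; $M,w\models\circ\varphi$ iff $M,S(w)\models\varphi$; $\varphi\,\mathsf{U}\,\psi$: some $k\ge0$ with $M,S^k(w)\models\psi$ and $M,S^i(w)\models\varphi$ for all $0\le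 i<k$; $\varphi\,\mathsf{R}\,\psi$: for all $k\ge0$, $M,S^k(w)\models\psi$ or $M,S^i(w)\models\varphi$ for some $0\le i<k$. $M$ is total if $V((i,0))=V((i,1))$ for all $i$. For THT models $M'=(\cdot,V')$, $M=(\cdot,V)$: $M'\le M$ iff $V'((i,1))=V((i,1))$ and $V'((i,0))\subseteq V((i,0))$ for all $i$; $M'<M$ iff $M'\le M$ and $V'\neq V$. A temporal equilibrium model of a theory $\Gamma$ is a total THT model $M$ with $M,(0,0)\models\Gamma$ such that no THT model $M'<M$ has $M',(0,0)\models\Gamma$. $\Gamma$ is THT-consistent if some THT model satisfies all of $\Gamma$ at some world; $\Gamma\models_{\mathrm{THT}}\Delta$ means every THT model and world satisfying all of $\Gamma$ satisfies all of $\Delta$. $\mathbb{P}^{\circ}:=\{\circ^ip\mid p\in\mathbb{P},i\ge0\}$. $T\subseteq\mathbb{P}^{\circ}$ is a THT-temporal safe belief set of $\Gamma$ if $\Sigma_T:=\Gamma\cup\{\circ^i\neg\neg p\mid \circ^ip\in T\}\cup\{\circ^i\neg p\mid\circ^ip\notin T\}$ is THT-consistent and $\Sigma_T\models_{\mathrm{THT}}T$. *)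

theory Defs
  imports Main "HOL-Library.Countable"
begin

datatype 'a tformula =
    Atom 'a
  | Bot
  | And "'a tformula" "'a tformula"
  | Or "'a tformula" "'a tformula"
  | Impl "'a tformula" "'a tformula"
  | Next "'a tformula"
  | Until "'a tformula" "'a tformula"
  | Release "'a tformula" "'a tformula"

definition Neg :: "'a tformula \<Rightarrow> 'a tformula" where
  "Neg \<phi> = Impl \<phi> Bot"

definition nexts :: "nat \<Rightarrow> 'a tformula \<Rightarrow> 'a tformula" where
  "nexts i \<phi> = (Next ^^ i) \<phi>"

(* Worlds (i,h) of W = N x {0,1}; h = False encodes 0 ("here"), h = True encodes 1 ("there").
   A valuation is V :: nat \<Rightarrow> bool \<Rightarrow> 'a set, V i h = V((i,h)). The frame is fixed,
   so a THT model is identified with its valuation. *)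
type_synonym 'a valuation = "nat \<Rightarrow> bool \<Rightarrow> 'a set"

definition tht_model :: "'a valuation \<Rightarrow> bool" where
  "tht_model V \<longleftrightarrow> (\<forall>i. V i False \<subseteq> V i True)"

(* (i,h) \<preccurlyeq> (j,t) iff i = j and h \<le> t *)
fun sat :: "'a valuation \<Rightarrow> nat \<Rightarrow> bool \<Rightarrow> 'a tformula \<Rightarrow> bool" where
  "sat V i h (Atom p) = (p \<in> V i h)"
| "sat V i h Bot = False"
| "sat V i h (And \<phi> \<psi>) = (sat V i h \<phi> \<and> sat V i h \<psi>)"
| "sat V i h (Or \<phi> \<psi>) = (sat V i h \<phi> \<or> sat V i h \<psi>)"
| "sat V i h (Impl \<phi> \<psi>) = (\<forall>t. h \<le> t \<longrightarrow> (sat V i t \<phi> \<longrightarrow> sat V i t \<psi>))"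
| "sat V i h (Next \<phi>) = sat V (Suc i) h \<phi>"
| "sat V i h (Until \<phi> \<psi>) =
     (\<exists>k. sat V (i + k) h \<psi> \<and> (\<forall>j<k. sat V (i + j) h \<phi>))"
| "sat V i h (Release \<phi> \<psi>) =
     (\<forall>k. sat V (i + k) h \<psi> \<or> (\<exists>j<k. sat V (i + j) h \<phi>))"

definition sat_set :: "'a valuation \<Rightarrow> nat \<Rightarrow> bool \<Rightarrow> 'a tformula set \<Rightarrow> bool" where
  "sat_set V i h \<Gamma> \<longleftrightarrow> (\<forall>\<phi>\<in>\<Gamma>. sat V i h \<phi>)"

definition total :: "'a valuation \<Rightarrow> bool" where
  "total V \<longleftrightarrow> (\<forall>i. V i False = V i True)"

definition le_model :: "'a valuation \<Rightarrow> 'a valuation \<Rightarrow> bool" where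
  "le_model V' V \<longleftrightarrow> (\<forall>i. V' i True = V i True \<and> V' i False \<subseteq> V i False)"

definition lt_model :: "'a valuation \<Rightarrow> 'a valuation \<Rightarrow> bool" where
  "lt_model V' V \<longleftrightarrow> le_model V' V \<and> V' \<noteq> V"

definition temporal_equilibrium_model :: "'a tformula set \<Rightarrow> 'a valuation \<Rightarrow> bool" where
  "temporal_equilibrium_model \<Gamma> V \<longleftrightarrow>
     tht_model V \<and> total V \<and> sat_set V 0 False \<Gamma> \<and>
     \<not> (\<exists>V'. tht_model V' \<and> lt_model V' V \<and> sat_set V' 0 False \<Gamma>)"

definition tht_consistent :: "'a tformula set \<Rightarrow> bool" where
  "tht_consistent \<Gamma> \<longleftrightarrow> (\<exists>V i h. tht_model V \<and> sat_set V i h \<Gamma>)"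

definition tht_entails :: "'a tformula set \<Rightarrow> 'a tformula set \<Rightarrow> bool" where
  "tht_entails \<Gamma> \<Delta> \<longleftrightarrow>
     (\<forall>V i h. tht_model V \<longrightarrow> sat_set V i h \<Gamma> \<longrightarrow> sat_set V i h \<Delta>)"

definition Pcirc :: "'a tformula set" where
  "Pcirc = {nexts i (Atom p) | i p. True}"

definition Sigma_T :: "'a tformula set \<Rightarrow> 'a tformula set \<Rightarrow> 'a tformula set" where
  "Sigma_T \<Gamma> T = \<Gamma>
     \<union> {nexts i (Neg (Neg (Atom p))) | i p. nexts i (Atom p) \<in> T}
     \<union> {nexts i (Neg (Atom p)) | i p. nexts i (Atom p) \<notin> T}"

definition tht_temporal_safe_belief_set :: "'a tformula set \<Rightarrow> 'a tformula set \<Rightarrow> bool" where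
  "tht_temporal_safe_belief_set \<Gamma> T \<longleftrightarrow>
     T \<subseteq> Pcirc \<and> tht_consistent (Sigma_T \<Gamma> T) \<and> tht_entails (Sigma_T \<Gamma> T) T"

end

theory Submission
  imports Defs
begin

lemma nexts_sat: "sat V i h (nexts k \<phi>) = sat V (i+k) h \<phi>"
  by (induction k arbitrary: i) (simp_all add: nexts_def)

lemma nexts_inj: "nexts i (Atom p) = nexts j (Atom q) \<longleftrightarrow> i = j \<and> p = q"
proof (induction i arbitrary: j)
  case 0 then show ?case by (cases j) (auto simp: nexts_def)
next
  case (Suc i) then show ?case by (cases j) (auto simp: nexts_def)
qed

lemma sat_nn: "sat V i h (Neg (Neg (Atom p))) \<longleftrightarrow> p \<in> V i True"
  unfolding Neg_def apply simp
  by (metis (full_types) le_boolI)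

lemma sat_n: "tht_model V \<Longrightarrow> sat V i h (Neg (Atom p)) \<longleftrightarrow> p \<notin> V i True"
  unfolding Neg_def tht_model_def apply simp
  by (metis (full_types) le_boolI subsetD)

lemma sat_shift: "sat V (i+k) h \<phi> = sat (\<lambda>k b. V (i+k) b) k h \<phi>"
  apply (induction \<phi> arbitrary: k h)
  apply (simp_all add: add.assoc)
  by (metis add_Suc_right)

lemma sat_true: "(\<And>k. V k True = W k True) \<Longrightarrow> sat V i True \<phi> = sat W i True \<phi>"
proof (induction \<phi> arbitrary: i)
  case (Impl \<phi>1 \<phi>2)
  have "\<And>t. True \<le> t \<longleftrightarrow> t = True" by auto
  then show ?case using Impl by simp
qed simp_all

lemma sat_totalF: "total V \<Longrightarrow> sat V i False \<phi> = sat V i True \<phi>"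
proof (induction \<phi> arbitrary: i)
  case (Atom x) then show ?case by (auto simp: total_def)
next
  case (Impl \<phi>1 \<phi>2)
  have q: "(\<forall>t::bool. h \<le> t \<longrightarrow> P t) \<longleftrightarrow> P h \<and> P True" for P h
    by (cases h) (auto, metis (full_types))
  show ?case using Impl by (simp only: sat.simps q)
qed simp_all

lemma sat_total: "total V \<Longrightarrow> sat V i h \<phi> = sat V i True \<phi>"
  using sat_totalF by (cases h) auto

theorem proposition5p3:
  fixes \<Gamma> :: "('a::countable) tformula set"
    and V :: "'a valuation"
    and T :: "'a tformula set"
  assumes "tht_model V"
    and "total V"
    and "T = {nexts i (Atom p) | i p. p \<in> V i False}"
  shows "temporal_equilibrium_model \<Gamma> V \<longleftrightarrow> tht_temporal_safe_belief_set \<Gamma> T"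
proof -
  have memT: "nexts j (Atom p) \<in> T \<longleftrightarrow> p \<in> V j False" for j p
    using assms(3) by (auto simp: nexts_inj)
  have tot: "V j False = V j True" for j using assms(2) unfolding total_def by blast
  have satT: "sat_set W i h T \<longleftrightarrow> (\<forall>j p. p \<in> V j False \<longrightarrow> p \<in> W (i+j) h)" for W i h
  proof
    assume "sat_set W i h T"
    then show "\<forall>j p. p \<in> V j False \<longrightarrow> p \<in> W (i+j) h"
      unfolding sat_set_def assms(3) using nexts_sat[of W i h] by fastforce
  next
    assume "\<forall>j p. p \<in> V j False \<longrightarrow> p \<in> W (i+j) h"
    then show "sat_set W i h T"
      unfolding sat_set_def assms(3) by (auto simp: nexts_sat)
  qed
  have satS: "sat_set W i h (Sigma_T \<Gamma> T) \<longleftrightarrow> sat_set W i h \<Gamma> \<and>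
      (\<forall>j p. p \<in> V j True \<longleftrightarrow> p \<in> W (i+j) True)" if "tht_model W" for W i h
  proof
    assume A: "sat_set W i h (Sigma_T \<Gamma> T)"
    have "p \<in> V j True \<longleftrightarrow> p \<in> W (i+j) True" for j p
    proof (cases "p \<in> V j True")
      case True
      then have "nexts j (Neg (Neg (Atom p))) \<in> Sigma_T \<Gamma> T"
        unfolding Sigma_T_def by (auto simp: memT tot)
      then show ?thesis using A True unfolding sat_set_def by (auto simp: nexts_sat sat_nn)
    next
      case False
      then have "nexts j (Neg (Atom p)) \<in> Sigma_T \<Gamma> T"
        unfolding Sigma_T_def by (auto simp: memT tot)
      then show ?thesis using A False that unfolding sat_set_def by (auto simp: nexts_sat sat_n)
    qed
    moreover have "sat_set W i h \<Gamma>" using A unfolding sat_set_def Sigma_T_def by auto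
    ultimately show "sat_set W i h \<Gamma> \<and> (\<forall>j p. p \<in> V j True \<longleftrightarrow> p \<in> W (i+j) True)" by blast
  next
    assume "sat_set W i h \<Gamma> \<and> (\<forall>j p. p \<in> V j True \<longleftrightarrow> p \<in> W (i+j) True)"
    then show "sat_set W i h (Sigma_T \<Gamma> T)" using that
      unfolding sat_set_def Sigma_T_def by (auto simp: nexts_sat sat_nn sat_n memT tot)
  qed
  have shift_model: "tht_model (\<lambda>k b. W (i+k) b)" if "tht_model W" for W :: "'a valuation" and i
    using that by (simp add: tht_model_def)
  have shift_set: "sat_set W i h \<Gamma> = sat_set (\<lambda>k b. W (i+k) b) 0 h \<Gamma>" for W :: "'a valuation" and i h
    unfolding sat_set_def using sat_shift[where k=0 and V=W and i=i and h=h] by simp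
  show ?thesis
  proof
    assume eq: "temporal_equilibrium_model \<Gamma> V"
    then have G: "sat_set V 0 False \<Gamma>" and minimal:
      "\<And>V'. tht_model V' \<Longrightarrow> sat_set V' 0 False \<Gamma> \<Longrightarrow> \<not> lt_model V' V"
      unfolding temporal_equilibrium_model_def by auto
    have "T \<subseteq> Pcirc" unfolding assms(3) Pcirc_def by auto
    moreover have "tht_consistent (Sigma_T \<Gamma> T)"
      unfolding tht_consistent_def using satS[OF assms(1), of 0 False] G assms(1) by auto
    moreover have "tht_entails (Sigma_T \<Gamma> T) T"
      unfolding tht_entails_def
    proof (intro allI impI)
      fix W :: "'a valuation" and i h
      assume W: "tht_model W" and S: "sat_set W i h (Sigma_T \<Gamma> T)"
      define W' where "W' = (\<lambda>k b. W (i+k) b)"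
      have W'm: "tht_model W'" using shift_model[OF W] W'_def by simp
      have GW: "sat_set W' 0 h \<Gamma>" and TR: "\<And>j. W' j True = V j True"
        using S satS[OF W] shift_set W'_def by auto
      show "sat_set W i h T"
      proof (cases h)
        case True
        then show ?thesis using satT TR W'_def tot by auto
      next
        case False
        have le: "le_model W' V" unfolding le_model_def using TR W'm tot
          by (auto simp: tht_model_def)
        have "W' = V" using minimal[OF W'm] GW False le unfolding lt_model_def by auto
        then show ?thesis using satT W'_def False by auto
      qed
    qed
    ultimately show "tht_temporal_safe_belief_set \<Gamma> T"
      unfolding tht_temporal_safe_belief_set_def by auto
  next
    assume sb: "tht_temporal_safe_belief_set \<Gamma> T"
    then obtain W i h where W: "tht_model W" and S: "sat_set W i h (Sigma_T \<Gamma> T)"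
      and ent: "tht_entails (Sigma_T \<Gamma> T) T"
      unfolding tht_temporal_safe_belief_set_def tht_consistent_def by auto
    define W' where "W' = (\<lambda>k b. W (i+k) b)"
    have GW: "sat_set W' 0 h \<Gamma>" and TR: "\<And>j. W' j True = V j True"
      using S satS[OF W] shift_set W'_def by auto
    have "sat_set W' 0 True \<Gamma>"
    proof (cases h)
      case True then show ?thesis using GW by simp
    next
      case False
      have "sat_set W i h T" using ent W S unfolding tht_entails_def by auto
      then have "V j False \<subseteq> W' j False" for j using satT W'_def False by auto
      moreover have "W' j False \<subseteq> W' j True" for j
        using W W'_def by (auto simp: tht_model_def)
      ultimately have "W' = V" using TR tot by (intro ext) (metis (full_types) subset_antisym)
      then show ?thesis using GW False sat_totalF[OF assms(2)] by (simp add: sat_set_def)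
    qed
    then have G: "sat_set V 0 False \<Gamma>"
      using sat_true[of W' V, OF TR] sat_totalF[OF assms(2)] by (simp add: sat_set_def)
    have "\<not> (\<exists>V'. tht_model V' \<and> lt_model V' V \<and> sat_set V' 0 False \<Gamma>)"
    proof
      assume "\<exists>V'. tht_model V' \<and> lt_model V' V \<and> sat_set V' 0 False \<Gamma>"
      then obtain V' where V': "tht_model V'" "lt_model V' V" "sat_set V' 0 False \<Gamma>" by blast
      have TR': "V' j True = V j True" for j using V'(2) by (simp add: lt_model_def le_model_def)
      have "sat_set V' 0 False (Sigma_T \<Gamma> T)" using satS[OF V'(1)] V'(3) TR' by auto
      then have "sat_set V' 0 False T" using ent V'(1) unfolding tht_entails_def by blast
      then have "V j False \<subseteq> V' j False" for j using satT by auto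
      moreover have "V' j False \<subseteq> V j False" for j using V'(2) by (simp add: lt_model_def le_model_def)
      ultimately have "V' = V" using TR' by (intro ext) (metis (full_types) subset_antisym)
      then show False using V'(2) by (simp add: lt_model_def)
    qed
    then show "temporal_equilibrium_model \<Gamma> V"
      unfolding temporal_equilibrium_model_def using assms(1,2) G by auto
  qed
qed

end
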